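(* Let $x\in\mathbb X$ and $B\Subset\mathbb X$. Then \[ \prod_{Y\in\mathbf F(x)}\max\Big\{|W(Y\mid B)|,\ 1+|W(Y\mid B)-1|\alpha^S\ \Big|\ \varnothing\neq S\subset Y\setminus\{x\}\Big\} \le\mathbf 1_{\{x\notin B\}}\prod_{X\in\mathbf F(x)}\max\Big\{|W(X)|,\ 1+|W(X)-1|\alpha^S\ \Big|\ \varnothing\neq S\subset X\setminus\{x\}\Big\}. \]
   Context: $\mathbb X$ is a finite or countably infinite set; $X\Subset\mathbb X$ means finite subset; $\mathbf F$ is the set of finite subsets of $\mathbb X$ and $\mathbf F(x)=\{X\Subset\mathbb X\mid x\in X\}$. Fix $W:\mathbf F\to\mathbb C$, $r:\mathbb X\to[0,1)$, $\alpha=\frac r{1-r}$, and write $\alpha^S=\prod_{s\in S}\alpha(s)$. The conditional interaction is $W(X\mid B)=\prod_{C\subset B}W(X\cup C)$ if $X\cap B=\varnothing$, $W(X\mid B)=0$ if $X=\{y\}$ with $y\in B$, and $W(X\mid B)=1$ otherwise. A maximum $\max\{a,\ b_S\mid S\in\mathcal S\}$ denotes the maximum of $a$ together with all $b_S$, $S\in\mathcal S$ (it equals $a$ if $\mathcal S=\varnothing$). Products of nonnegative numbers over infinite index sets are understood in $[0,\infty]$. *)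

theory Defs
  imports "HOL-Analysis.Analysis"
begin

definition eprod :: "('i \<Rightarrow> ennreal) \<Rightarrow> 'i set \<Rightarrow> ennreal" where
  "eprod f I = Lim (finite_subsets_at_top I) (\<lambda>F. \<Prod>i\<in>F. f i)"

definition Fx :: "'a \<Rightarrow> 'a set set" where
  "Fx x = {X. finite X \<and> x \<in> X}"

definition alpha :: "('a \<Rightarrow> real) \<Rightarrow> 'a \<Rightarrow> real" where
  "alpha r s = r s / (1 - r s)"

definition alpha_pow :: "('a \<Rightarrow> real) \<Rightarrow> 'a set \<Rightarrow> real" where
  "alpha_pow r S = (\<Prod>s\<in>S. alpha r s)"

definition condW :: "('a set \<Rightarrow> complex) \<Rightarrow> 'a set \<Rightarrow> 'a set \<Rightarrow> complex" where
  "condW W X B =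
     (if X \<inter> B = {} then (\<Prod>C\<in>Pow B. W (X \<union> C))
      else if (\<exists>y. X = {y} \<and> y \<in> B) then 0
      else 1)"

definition maxfac :: "('a \<Rightarrow> real) \<Rightarrow> complex \<Rightarrow> 'a set \<Rightarrow> 'a \<Rightarrow> real" where
  "maxfac r w X x =
     Max (insert (cmod w) {1 + cmod (w - 1) * alpha_pow r S | S. S \<noteq> {} \<and> S \<subseteq> X - {x}})"

end

theory Submission
  imports Defs
begin

lemma eprod_SUP:
  fixes f :: "'i \<Rightarrow> ennreal"
  assumes i0: "i0 \<in> I" and ge: "\<And>i. i \<in> I \<Longrightarrow> i \<noteq> i0 \<Longrightarrow> 1 \<le> f i"
  shows "eprod f I = (SUP F\<in>{F. finite F \<and> F \<subseteq> I}. \<Prod>i\<in>insert i0 F. f i)"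
proof -
  let ?h = "\<lambda>F. \<Prod>i\<in>insert i0 F. f i"
  define L where "L = (SUP F\<in>{F. finite F \<and> F \<subseteq> I}. ?h F)"
  have mono: "?h F \<le> ?h G" if "finite G" "F \<subseteq> G" "G \<subseteq> I" for F G
  proof -
    have "?h G = (\<Prod>i\<in>insert i0 G - insert i0 F. f i) * ?h F"
      by (rule prod.subset_diff) (use that in auto)
    moreover have "1 \<le> (\<Prod>i\<in>insert i0 G - insert i0 F. f i)"
      by (rule prod_ge_1) (use that ge in auto)
    ultimately show ?thesis
      by (metis mult_1 mult_right_mono zero_le)
  qed
  have lim: "(?h \<longlongrightarrow> L) (finite_subsets_at_top I)"
  proof (rule increasing_tendsto)
    show "\<forall>\<^sub>F n in finite_subsets_at_top I. ?h n \<le> L"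
      by (rule eventually_finite_subsets_at_top_weakI) (auto simp: L_def intro: SUP_upper)
    fix y assume "y < L"
    then obtain F0 where F0: "finite F0" "F0 \<subseteq> I" "y < ?h F0"
      unfolding L_def less_SUP_iff by auto
    show "\<forall>\<^sub>F n in finite_subsets_at_top I. y < ?h n"
      unfolding eventually_finite_subsets_at_top
      using F0 mono by (intro exI[of _ F0]) (auto intro: less_le_trans)
  qed
  have ev: "\<forall>\<^sub>F F in finite_subsets_at_top I. ?h F = prod f F"
    unfolding eventually_finite_subsets_at_top
    using i0 by (intro exI[of _ "{i0}"]) (auto simp: insert_absorb)
  have "((\<lambda>F. prod f F) \<longlongrightarrow> L) (finite_subsets_at_top I)"
    using tendsto_cong[OF ev] lim by simp
  then have "eprod f I = L"
    unfolding eprod_def by (intro tendsto_Lim) auto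
  then show ?thesis by (simp add: L_def)
qed

lemma maxfac_fin:
  "finite {1 + cmod (w - 1) * alpha_pow r S | S. S \<noteq> {} \<and> S \<subseteq> X - {x}}" if "finite X"
proof -
  have "{1 + cmod (w - 1) * alpha_pow r S | S. S \<noteq> {} \<and> S \<subseteq> X - {x}}
     \<subseteq> (\<lambda>S. 1 + cmod (w - 1) * alpha_pow r S) ` Pow (X - {x})" by auto
  then show ?thesis using that by (meson finite_Diff finite_Pow_iff finite_imageI finite_subset)
qed

lemma maxfac_ge: "finite X \<Longrightarrow> cmod w \<le> maxfac r w X x"
  unfolding maxfac_def using maxfac_fin by (intro Max_ge) auto

lemma maxfac_geS: "finite X \<Longrightarrow> S \<noteq> {} \<Longrightarrow> S \<subseteq> X - {x} \<Longrightarrow>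
   1 + cmod (w - 1) * alpha_pow r S \<le> maxfac r w X x"
  unfolding maxfac_def using maxfac_fin by (intro Max_ge) auto

lemma maxfac_le: "finite X \<Longrightarrow> cmod w \<le> M \<Longrightarrow>
   (\<And>S. S \<noteq> {} \<Longrightarrow> S \<subseteq> X - {x} \<Longrightarrow> 1 + cmod (w - 1) * alpha_pow r S \<le> M) \<Longrightarrow>
   maxfac r w X x \<le> M"
  unfolding maxfac_def using maxfac_fin by (subst Max_le_iff) auto

lemma maxfac_mono: assumes "finite X'" "X \<subseteq> X'" shows "maxfac r w X x \<le> maxfac r w X' x"
proof (rule maxfac_le)
  show "finite X" using assms finite_subset by blast
  show "cmod w \<le> maxfac r w X' x" using assms(1) by (rule maxfac_ge)
  fix S assume "S \<noteq> {}" "S \<subseteq> X - {x}"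
  then show "1 + cmod (w - 1) * alpha_pow r S \<le> maxfac r w X' x"
    using assms by (intro maxfac_geS) auto
qed

lemma maxfac_one: "finite X \<Longrightarrow> maxfac r 1 X x = 1"
proof (rule antisym)
  assume X: "finite X"
  show "maxfac r 1 X x \<le> 1" by (rule maxfac_le[OF X]) auto
  show "1 \<le> maxfac r 1 X x" using maxfac_ge[OF X, of 1 r x] by simp
qed

lemma alpha_pow_nonneg:
  assumes "\<And>s. 0 \<le> r s \<and> r s < 1" shows "0 \<le> alpha_pow r S"
  unfolding alpha_pow_def alpha_def
proof (rule prod_nonneg)
  fix s show "0 \<le> r s / (1 - r s)" using assms[of s] by (intro divide_nonneg_nonneg) auto
qed

lemma maxfac_ge1:
  assumes "\<And>s. 0 \<le> r s \<and> r s < 1" "finite X" "x \<in> X" "X \<noteq> {x}"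
  shows "1 \<le> maxfac r w X x"
proof -
  have "X - {x} \<noteq> {}" using assms by auto
  then have "1 + cmod (w - 1) * alpha_pow r (X - {x}) \<le> maxfac r w X x"
    using assms by (intro maxfac_geS) auto
  moreover have "0 \<le> cmod (w - 1) * alpha_pow r (X - {x})"
    using alpha_pow_nonneg[of r, OF assms(1)] by simp
  ultimately show ?thesis by linarith
qed

lemma maxfac_mult:
  assumes r: "\<And>s. 0 \<le> r s \<and> r s < 1" and X: "finite X"
  shows "maxfac r (w1 * w2) X x \<le> maxfac r w1 X x * maxfac r w2 X x"
proof (rule maxfac_le[OF X])
  let ?M1 = "maxfac r w1 X x" and ?M2 = "maxfac r w2 X x"
  have g1: "cmod w1 \<le> ?M1" and g2: "cmod w2 \<le> ?M2" using X by (auto intro: maxfac_ge)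
  have p1: "0 \<le> ?M1" by (rule order_trans[OF norm_ge_zero g1])
  show "cmod (w1 * w2) \<le> ?M1 * ?M2"
    unfolding norm_mult by (rule mult_mono) (use g1 g2 p1 in auto)
  fix S assume S: "S \<noteq> {}" "S \<subseteq> X - {x}"
  define a where "a = alpha_pow r S"
  have a0: "0 \<le> a" unfolding a_def by (rule alpha_pow_nonneg[OF r])
  have h1: "1 + cmod (w1 - 1) * a \<le> ?M1" and h2: "1 + cmod (w2 - 1) * a \<le> ?M2"
    unfolding a_def using S X by (auto intro!: maxfac_geS)
  have "w1 * w2 - 1 = w1 * (w2 - 1) + (w1 - 1)" by (simp add: algebra_simps)
  then have "cmod (w1 * w2 - 1) \<le> cmod w1 * cmod (w2 - 1) + cmod (w1 - 1)"
    by (metis norm_mult norm_triangle_ineq)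
  then have "1 + cmod (w1 * w2 - 1) * a \<le> 1 + cmod (w1 - 1) * a + cmod w1 * (cmod (w2 - 1) * a)"
    using a0 by (smt (verit, ccfv_SIG) mult.assoc distrib_right mult_right_mono)
  also have "\<dots> \<le> ?M1 + ?M1 * (cmod (w2 - 1) * a)"
    using h1 g1 a0 by (intro add_mono mult_right_mono) auto
  also have "\<dots> = ?M1 * (1 + cmod (w2 - 1) * a)" by (simp add: algebra_simps)
  also have "\<dots> \<le> ?M1 * ?M2"
    using h2 p1 by (intro mult_left_mono) auto
  finally show "1 + cmod (w1 * w2 - 1) * alpha_pow r S \<le> ?M1 * ?M2" by (simp add: a_def)
qed

lemma maxfac_prod:
  assumes r: "\<And>s. 0 \<le> r s \<and> r s < 1" and X: "finite X" and A: "finite A"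
  shows "maxfac r (\<Prod>i\<in>A. w i) X x \<le> (\<Prod>i\<in>A. maxfac r (w i) X x)"
  using A
proof (induction A rule: finite_induct)
  case empty then show ?case using maxfac_one[OF X] by simp
next
  case (insert a A)
  have "maxfac r (\<Prod>i\<in>insert a A. w i) X x = maxfac r (w a * (\<Prod>i\<in>A. w i)) X x"
    using insert by simp
  also have "\<dots> \<le> maxfac r (w a) X x * maxfac r (\<Prod>i\<in>A. w i) X x"
    by (rule maxfac_mult[OF r X])
  also have "\<dots> \<le> maxfac r (w a) X x * (\<Prod>i\<in>A. maxfac r (w i) X x)"
    using insert order_trans[OF norm_ge_zero maxfac_ge[OF X, of "w a"]] by (intro mult_left_mono) auto
  finally show ?case using insert by simp
qed

theorem corollary4p7:
  fixes W :: "'a::countable set \<Rightarrow> complex"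
    and r :: "'a \<Rightarrow> real"
    and x :: 'a
    and B :: "'a set"
  assumes r_range: "\<And>s. 0 \<le> r s \<and> r s < 1"
    and B_fin: "finite B"
  shows "eprod (\<lambda>Y. ennreal (maxfac r (condW W Y B) Y x)) (Fx x)
         \<le> (if x \<notin> B then 1 else 0) * eprod (\<lambda>X. ennreal (maxfac r (W X) X x)) (Fx x)"
proof -
  define mL where "mL Y = maxfac r (condW W Y B) Y x" for Y
  define mR where "mR X = maxfac r (W X) X x" for X
  have x0: "{x} \<in> Fx x" by (simp add: Fx_def)
  have mL0: "0 \<le> mL Y" if "Y \<in> Fx x" for Y
    using that unfolding mL_def Fx_def by (metis (mono_tags) mem_Collect_eq order_trans[OF norm_ge_zero maxfac_ge])
  have mR0: "0 \<le> mR Y" if "Y \<in> Fx x" for Y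
    using that unfolding mR_def Fx_def by (metis (mono_tags) mem_Collect_eq order_trans[OF norm_ge_zero maxfac_ge])
  have eL: "eprod (\<lambda>Y. ennreal (mL Y)) (Fx x) =
      (SUP F\<in>{F. finite F \<and> F \<subseteq> Fx x}. \<Prod>i\<in>insert {x} F. ennreal (mL i))"
    by (rule eprod_SUP[OF x0]) (simp add: mL_def Fx_def maxfac_ge1[OF r_range])
  have eR: "eprod (\<lambda>Y. ennreal (mR Y)) (Fx x) =
      (SUP F\<in>{F. finite F \<and> F \<subseteq> Fx x}. \<Prod>i\<in>insert {x} F. ennreal (mR i))"
    by (rule eprod_SUP[OF x0]) (simp add: mR_def Fx_def maxfac_ge1[OF r_range])
  show ?thesis
  proof (cases "x \<in> B")
    case True
    have "condW W {x} B = 0" using True by (auto simp: condW_def)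
    then have "mL {x} = 0" by (simp add: mL_def maxfac_def)
    then have h: "(\<Prod>i\<in>insert {x} F. ennreal (mL i)) = 0" if "finite F" for F
      using that by (simp add: prod.insert_remove)
    have "(SUP F\<in>{F. finite F \<and> F \<subseteq> Fx x}. \<Prod>i\<in>insert {x} F. ennreal (mL i))
        = (SUP F\<in>{F. finite F \<and> F \<subseteq> Fx x}. (0::ennreal))"
      by (rule SUP_cong[OF refl]) (simp add: h)
    moreover have "(SUP F\<in>{F. finite F \<and> F \<subseteq> Fx x}. (0::ennreal)) = 0"
      by (rule antisym, rule SUP_least, simp, simp)
    ultimately have "eprod (\<lambda>Y. ennreal (mL Y)) (Fx x) = 0" unfolding eL by simp
    then show ?thesis by (simp add: mL_def)
  next
    case False
    have "(\<Prod>i\<in>insert {x} F. ennreal (mL i)) \<le> eprod (\<lambda>Y. ennreal (mR Y)) (Fx x)"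
      if F: "finite F" "F \<subseteq> Fx x" for F
    proof -
      define F' where "F' = insert {x} F"
      define D where "D = {Y\<in>F'. Y \<inter> B = {}}"
      define G where "G = (\<lambda>(Y, C). Y \<union> C) ` (D \<times> Pow B)"
      have F'sub: "F' \<subseteq> Fx x" "finite F'" using F x0 by (auto simp: F'_def)
      have finD: "finite D" using F'sub by (simp add: D_def)
      have xD: "{x} \<in> D" using False by (auto simp: D_def F'_def)
      have xG: "{x} \<in> G" unfolding G_def using xD by (auto intro!: image_eqI[of _ _ "({x}, {})"])
      have finG: "finite G" using finD B_fin by (simp add: G_def)
      have Gsub: "G \<subseteq> Fx x" using F'sub B_fin by (auto simp: G_def D_def Fx_def intro: finite_subset)
      have inj: "inj_on (\<lambda>(Y, C). Y \<union> C) (D \<times> Pow B)"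
      proof (rule inj_onI, clarsimp)
        fix Y C Y' C' assume "Y \<in> D" "Y' \<in> D" "C \<subseteq> B" "C' \<subseteq> B" "Y \<union> C = Y' \<union> C'"
        then show "Y = Y' \<and> C = C'" unfolding D_def by blast
      qed
      have "(\<Prod>Y\<in>F'. mL Y) = (\<Prod>Y\<in>D. mL Y)"
      proof (rule prod.mono_neutral_right[OF F'sub(2)])
        show "D \<subseteq> F'" by (auto simp: D_def)
        show "\<forall>i\<in>F' - D. mL i = 1"
        proof
          fix Y assume Y: "Y \<in> F' - D"
          then have "Y \<in> Fx x" "Y \<inter> B \<noteq> {}" using F'sub by (auto simp: D_def)
          moreover have "\<not> (\<exists>y. Y = {y} \<and> y \<in> B)" using False \<open>Y \<in> Fx x\<close> by (auto simp: Fx_def)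
          ultimately show "mL Y = 1" by (auto simp: mL_def condW_def maxfac_one Fx_def)
        qed
      qed
      also have "\<dots> \<le> (\<Prod>Y\<in>D. \<Prod>C\<in>Pow B. mR (Y \<union> C))"
      proof (rule prod_mono, rule conjI)
        fix Y assume Y: "Y \<in> D"
        then have YF: "Y \<in> Fx x" "Y \<inter> B = {}" using F'sub by (auto simp: D_def)
        then show "0 \<le> mL Y" using mL0 by blast
        have fY: "finite Y" using YF by (simp add: Fx_def)
        have "mL Y = maxfac r (\<Prod>C\<in>Pow B. W (Y \<union> C)) Y x"
          using YF by (simp add: mL_def condW_def)
        also have "\<dots> \<le> (\<Prod>C\<in>Pow B. maxfac r (W (Y \<union> C)) Y x)"
          by (rule maxfac_prod[OF r_range fY]) (simp add: B_fin)
        also have "\<dots> \<le> (\<Prod>C\<in>Pow B. mR (Y \<union> C))"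
          unfolding mR_def
        proof (rule prod_mono, rule conjI)
          fix C assume "C \<in> Pow B"
          then have fC: "finite (Y \<union> C)" using fY B_fin finite_subset by blast
          show "0 \<le> maxfac r (W (Y \<union> C)) Y x" by (rule order_trans[OF norm_ge_zero maxfac_ge[OF fY]])
          show "maxfac r (W (Y \<union> C)) Y x \<le> maxfac r (W (Y \<union> C)) (Y \<union> C) x"
            by (rule maxfac_mono[OF fC]) auto
        qed
        finally show "mL Y \<le> (\<Prod>C\<in>Pow B. mR (Y \<union> C))" .
      qed
      also have "\<dots> = (\<Prod>(Y, C)\<in>D \<times> Pow B. mR (Y \<union> C))"
        by (rule prod.cartesian_product)
      also have "\<dots> = (\<Prod>X\<in>G. mR X)"
        unfolding G_def by (subst prod.reindex[OF inj]) (simp add: case_prod_unfold comp_def)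
      finally have real: "(\<Prod>Y\<in>F'. mL Y) \<le> (\<Prod>X\<in>G. mR X)" .
      have "(\<Prod>i\<in>F'. ennreal (mL i)) = ennreal (\<Prod>Y\<in>F'. mL Y)"
        by (rule prod_ennreal) (use F'sub mL0 in auto)
      also have "\<dots> \<le> ennreal (\<Prod>X\<in>G. mR X)" using real by (rule ennreal_leI)
      also have "\<dots> = (\<Prod>i\<in>insert {x} G. ennreal (mR i))"
        using xG by (simp add: insert_absorb prod_ennreal[symmetric] mR0 subsetD[OF Gsub])
      also have "\<dots> \<le> eprod (\<lambda>Y. ennreal (mR Y)) (Fx x)"
        unfolding eR using finG Gsub by (intro SUP_upper) auto
      finally show ?thesis by (simp add: F'_def)
    qed
    then have "eprod (\<lambda>Y. ennreal (mL Y)) (Fx x) \<le> eprod (\<lambda>Y. ennreal (mR Y)) (Fx x)"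
      unfolding eL by (intro SUP_least) auto
    then show ?thesis using False by (simp add: mL_def mR_def)
  qed
qed

end
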